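(* Let $W>0$ and define $C(x)=W\log_2(1+x)$ for $x\ge 0$. Consider a monitoring receiver that simultaneously receives, over a two-user Gaussian multiple access channel, a transmission from an announcer $A$ with fixed rate $R_A\ge 0$ and received SNR $\gamma_A\ge 0$, and a downlink transmission from a base station $B$ with received SNR $\gamma_B\ge 0$. Let $\Gamma_A=C^{-1}(R_A)=2^{R_A/W}-1$. Suppose $B$ knows $R_A$ and $\gamma_B$ (but not $\gamma_A$) and selects its rate as $R_B=C(\Gamma_B)$ with $\Gamma_B=\frac{\gamma_B}{1+\Gamma_A}$. Then the decodability of $A$'s transmission depends solely on whether $R_A\le C(\gamma_A)$ (equivalently $\gamma_A\ge\Gamma_A$): whenever $R_A\le C(\gamma_A)$, the rate pair $(R_A,R_B)$ satisfies all three multiple access channel inequalities $$R_A\le C(\gamma_A),\qquad R_B\le C(\gamma_B),\qquad R_A+R_B\le C(\gamma_A+\gamma_B),$$ so both transmissions can be decoded, while if $R_A> C(\gamma_A)$ the transmission of $A$ cannot be decoded.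
   Context: Decoding is in the information-theoretic sense with Gaussian codebooks: the transmission of $A$ is decodable at the receiver either by first decoding $B$ treating $A$ as noise, subtracting it, and then decoding $A$ in noise (possible iff $R_A\le C(\gamma_A)$), or by joint decoding of both transmissions, which is possible iff all three multiple access channel inequalities above hold. *)

theory Defs
  imports Complex_Main
begin

definition cap :: "real \<Rightarrow> real \<Rightarrow> real" where
  "cap W x = W * log 2 (1 + x)"

definition mac_ok :: "real \<Rightarrow> real \<Rightarrow> real \<Rightarrow> real \<Rightarrow> real \<Rightarrow> bool" where
  "mac_ok W RA RB gA gB \<longleftrightarrow>
     RA \<le> cap W gA \<and> RB \<le> cap W gB \<and> RA + RB \<le> cap W (gA + gB)"

text \<open>Decodability of A: either by successive interference cancellation
  (decode B treating A as noise, then A in noise, possible iff RA <= C(gA)),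
  or by joint decoding (possible iff all MAC inequalities hold).\<close>
definition decodable_A :: "real \<Rightarrow> real \<Rightarrow> real \<Rightarrow> real \<Rightarrow> real \<Rightarrow> bool" where
  "decodable_A W RA RB gA gB \<longleftrightarrow> RA \<le> cap W gA \<or> mac_ok W RA RB gA gB"

end

theory Submission
  imports Defs
begin

theorem corollary1:
  fixes W RA gA gB :: real
  assumes "W > 0" and "RA \<ge> 0" and "gA \<ge> 0" and "gB \<ge> 0"
  defines "GA \<equiv> 2 powr (RA / W) - 1"
  defines "GB \<equiv> gB / (1 + GA)"
  defines "RB \<equiv> cap W GB"
  shows "(decodable_A W RA RB gA gB \<longleftrightarrow> RA \<le> cap W gA)
       \<and> (RA \<le> cap W gA \<longleftrightarrow> gA \<ge> GA)
       \<and> (RA \<le> cap W gA \<longrightarrow> mac_ok W RA RB gA gB)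
       \<and> (RA > cap W gA \<longrightarrow> \<not> decodable_A W RA RB gA gB)"
proof -
  have W: "W > 0" using assms by simp
  have GA1: "1 + GA = 2 powr (RA / W)" unfolding GA_def by simp
  have GApos: "1 + GA \<ge> 1" unfolding GA1 using assms by (simp add: ge_one_powr_ge_zero)
  have eq1: "RA = W * log 2 (1 + GA)" unfolding GA1 using W by simp
  have iff2: "RA \<le> cap W gA \<longleftrightarrow> gA \<ge> GA"
  proof -
    have "RA \<le> cap W gA \<longleftrightarrow> log 2 (1 + GA) \<le> log 2 (1 + gA)"
      unfolding cap_def eq1 using W by simp
    also have "\<dots> \<longleftrightarrow> 1 + GA \<le> 1 + gA"
      using GApos assms(3) by (subst log_le_cancel_iff) auto
    finally show ?thesis by simp
  qed
  have dec: "decodable_A W RA RB gA gB \<longleftrightarrow> RA \<le> cap W gA"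
    unfolding decodable_A_def mac_ok_def by auto
  have mac: "mac_ok W RA RB gA gB" if h: "RA \<le> cap W gA"
  proof -
    have gle: "GA \<le> gA" using h iff2 by simp
    have GBnn: "GB \<ge> 0" unfolding GB_def using GApos assms(4) by simp
    have GBle: "GB \<le> gB" unfolding GB_def using GApos assms(4)
      by (simp add: divide_le_eq mult_le_cancel_left1)
    have "RB \<le> cap W gB" unfolding RB_def cap_def using W GBnn GBle
      by (simp add: mult_le_cancel_left_pos)
    moreover have "RA + RB \<le> cap W (gA + gB)"
    proof -
      have prod: "(1 + GA) * (1 + GB) = 1 + GA + gB"
        unfolding GB_def using GApos by (simp add: field_simps)
      have "RA + RB = W * (log 2 (1 + GA) + log 2 (1 + GB))"
        unfolding eq1 RB_def cap_def by (simp add: algebra_simps)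
      also have "\<dots> = W * log 2 (1 + GA + gB)"
        using GApos GBnn by (simp add: log_mult_pos[symmetric] prod)
      also have "\<dots> \<le> W * log 2 (1 + (gA + gB))"
        using W gle GApos assms(4)
        by (intro mult_left_mono) (auto simp: add.assoc)
      finally show ?thesis unfolding cap_def .
    qed
    ultimately show ?thesis unfolding mac_ok_def using h by simp
  qed
  show ?thesis using dec iff2 mac by auto
qed

end
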